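(* Let $\overline{G}$ be the roommate diversity game described in the context. If an outcome $\pi$ of $\overline{G}$ satisfies $|D_\pi^n|=1$ and $|D_\pi^-|=1$, then $\pi$ is a top-type outcome.
   Context: In a roommate diversity game with agent set $N=R\cup B$ ($R$ red, $B$ blue) and room size $s$, an outcome is a partition of $N$ into rooms of size $s$; $\pi(a)$ is the room containing $a$ and $\theta(C)=|C\cap R|/|C|$. Each agent $a$ has a trichotomous preference given by a partition of the fractions into sets $D_a^+$ (approved), $D_a^n$ (neutral), $D_a^-$ (disapproved), possibly empty, with approved $\succ$ neutral $\succ$ disapproved and indifference within each set. For an outcome $\pi$, $D_\pi^+=\{a:\theta(\pi(a))\in D_a^+\}$, and $D_\pi^n$, $D_\pi^-$ are defined analogously. The game $\overline{G}$: $R=\{r_1,r_2,r_3\}$, $B=\{b_1,\dots,b_6\}$, $s=3$; $r_1$: $D^+=\{1/3\}$, $D^-=\{2/3,1\}$; $r_2,r_3$: $D^+=\{2/3\}$, $D^-=\{1/3,1\}$; $b_1,\dots,b_4$: $D^+=\{1/3\}$, $D^n=\{2/3\}$, $D^-=\{0\}$; $b_5,b_6$: $D^+=\{0\}$, $D^-=\{1/3,2/3\}$ (a red agent is never in a room of fraction $0$, a blue agent never in one of fraction $1$). An outcome is top-type if it equals $\{\{r_1,\hat b_1,\hat b_2\},\{r_2,r_3,\hat b_3\},\{b_5,b_6,\hat b_4\}\}$ for some enumeration $\hat b_1,\hat b_2,\hat b_3,\hat b_4$ of $\{b_1,b_2,b_3,b_4\}$. *)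

theory Defs
  imports Complex_Main "HOL-Library.Disjoint_Sets"
begin

datatype agent = r1 | r2 | r3 | b1 | b2 | b3 | b4 | b5 | b6

definition red :: "agent set" where "red = {r1, r2, r3}"
definition blue :: "agent set" where "blue = {b1, b2, b3, b4, b5, b6}"

definition room_size :: nat where "room_size = 3"

definition is_outcome :: "agent set set \<Rightarrow> bool" where
  "is_outcome P \<longleftrightarrow> partition_on (UNIV :: agent set) P \<and> (\<forall>C\<in>P. card C = room_size)"

definition room :: "agent set set \<Rightarrow> agent \<Rightarrow> agent set" where
  "room P a = (THE C. C \<in> P \<and> a \<in> C)"

definition theta :: "agent set \<Rightarrow> rat" where
  "theta C = of_nat (card (C \<inter> red)) / of_nat (card C)"

fun Dplus :: "agent \<Rightarrow> rat set" where
  "Dplus r1 = {1/3}"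
| "Dplus r2 = {2/3}"
| "Dplus r3 = {2/3}"
| "Dplus b1 = {1/3}"
| "Dplus b2 = {1/3}"
| "Dplus b3 = {1/3}"
| "Dplus b4 = {1/3}"
| "Dplus b5 = {0}"
| "Dplus b6 = {0}"

fun Dneut :: "agent \<Rightarrow> rat set" where
  "Dneut r1 = {}"
| "Dneut r2 = {}"
| "Dneut r3 = {}"
| "Dneut b1 = {2/3}"
| "Dneut b2 = {2/3}"
| "Dneut b3 = {2/3}"
| "Dneut b4 = {2/3}"
| "Dneut b5 = {}"
| "Dneut b6 = {}"

fun Dminus :: "agent \<Rightarrow> rat set" where
  "Dminus r1 = {2/3, 1}"
| "Dminus r2 = {1/3, 1}"
| "Dminus r3 = {1/3, 1}"
| "Dminus b1 = {0}"
| "Dminus b2 = {0}"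
| "Dminus b3 = {0}"
| "Dminus b4 = {0}"
| "Dminus b5 = {1/3, 2/3}"
| "Dminus b6 = {1/3, 2/3}"

definition Dplus_out :: "agent set set \<Rightarrow> agent set" where
  "Dplus_out P = {a. theta (room P a) \<in> Dplus a}"
definition Dneut_out :: "agent set set \<Rightarrow> agent set" where
  "Dneut_out P = {a. theta (room P a) \<in> Dneut a}"
definition Dminus_out :: "agent set set \<Rightarrow> agent set" where
  "Dminus_out P = {a. theta (room P a) \<in> Dminus a}"

definition top_type :: "agent set set \<Rightarrow> bool" where
  "top_type P \<longleftrightarrow> (\<exists>x1 x2 x3 x4. distinct [x1, x2, x3, x4] \<and> {x1, x2, x3, x4} = {b1, b2, b3, b4} \<and>
      P = {{r1, x1, x2}, {r2, r3, x3}, {b5, b6, x4}})"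

end

theory Submission
  imports Defs
begin

lemma UNIV_agent: "(UNIV :: agent set) = {r1, r2, r3, b1, b2, b3, b4, b5, b6}"
  by (auto intro: agent.exhaust)

instance agent :: finite
  by standard (simp add: UNIV_agent)

lemma part_uniq:
  assumes "partition_on A P" "C \<in> P" "D \<in> P" "a \<in> C" "a \<in> D" shows "C = D"
proof (rule ccontr)
  assume "C \<noteq> D"
  hence "C \<inter> D = {}" using disjointD[OF partition_onD2[OF assms(1)] assms(2,3)] by blast
  thus False using assms(4,5) by blast
qed

lemma room_basic:
  assumes "is_outcome P"
  shows "room P a \<in> P \<and> a \<in> room P a"
proof -
  have pa: "partition_on UNIV P" using assms by (simp add: is_outcome_def)
  have "a \<in> \<Union>P" using partition_onD1[OF pa] by simp
  then obtain C where C: "C \<in> P" "a \<in> C" by (rule UnionE)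
  have u: "\<And>D. D \<in> P \<and> a \<in> D \<Longrightarrow> D = C"
  proof -
    fix D assume "D \<in> P \<and> a \<in> D"
    thus "D = C" using part_uniq[OF pa _ C(1) _ C(2)] by blast
  qed
  have "room P a = C" unfolding room_def by (rule the_equality) (use C u in blast)+
  thus ?thesis using C by simp
qed

lemma room_card:
  assumes "is_outcome P" shows "card (room P a) = 3"
  using assms room_basic[OF assms] by (simp add: is_outcome_def room_size_def)

lemma room_eq:
  assumes "is_outcome P" "b \<in> room P a" shows "room P b = room P a"
proof -
  have pa: "partition_on UNIV P" using assms by (simp add: is_outcome_def)
  have "room P b \<in> P" "b \<in> room P b" "room P a \<in> P" using room_basic[OF assms(1)] by auto
  thus ?thesis using part_uniq[OF pa] assms(2) by metis
qed

lemma room_mem: "is_outcome P \<Longrightarrow> a \<in> room P a" using room_basic by blast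

lemma theta_room: "is_outcome P \<Longrightarrow> theta (room P a) = of_nat (card (room P a \<inter> red)) / 3"
  by (simp add: theta_def room_card)

lemma at_most_one:
  assumes "card D = 1" "a \<in> D" "b \<in> D" shows "a = b"
  using assms by (metis card_1_singletonE singletonD)

lemma room_unique:
  assumes "is_outcome P" "C \<in> P" "a \<in> C" shows "room P a = C"
proof -
  have pa: "partition_on UNIV P" using assms by (simp add: is_outcome_def)
  have "room P a \<in> P" "a \<in> room P a" using room_basic[OF assms(1)] by auto
  thus ?thesis using part_uniq[OF pa] assms(2,3) by metis
qed

lemma not_red: "x \<notin> red \<Longrightarrow> x \<in> {b1, b2, b3, b4, b5, b6}"
  by (cases x) (auto simp: red_def)

lemma theta_vals:
  assumes "is_outcome P"
  shows "room P a \<inter> red = {} \<Longrightarrow> theta (room P a) = 0"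
    and "room P a \<inter> red = {x} \<Longrightarrow> theta (room P a) = 1/3"
    and "room P a \<inter> red = {x,y} \<Longrightarrow> x \<noteq> y \<Longrightarrow> theta (room P a) = 2/3"
    and "room P a \<inter> red = red \<Longrightarrow> theta (room P a) = 1"
  using theta_room[OF assms, of a] by (auto simp: red_def)

theorem mainTheorem7:
  assumes "is_outcome P"
    and "card (Dneut_out P) = 1"
    and "card (Dminus_out P) = 1"
  shows "top_type P"
proof -
  define R where "R = room P"
  have mem: "\<And>a. a \<in> R a" using room_mem[OF assms(1)] R_def by simp
  have eq: "\<And>a b. b \<in> R a \<Longrightarrow> R b = R a" using room_eq[OF assms(1)] R_def by simp
  have sym: "\<And>a b. b \<in> R a \<Longrightarrow> a \<in> R b" using mem eq by metis
  have cd: "\<And>a. card (R a) = 3" using room_card[OF assms(1)] R_def by simp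
  have t0: "\<And>a. R a \<inter> red = {} \<Longrightarrow> theta (R a) = 0"
    and t1: "\<And>a x. R a \<inter> red = {x} \<Longrightarrow> theta (R a) = 1/3"
    and t2: "\<And>a x y. R a \<inter> red = {x,y} \<Longrightarrow> x \<noteq> y \<Longrightarrow> theta (R a) = 2/3"
    and t3: "\<And>a. R a \<inter> red = red \<Longrightarrow> theta (R a) = 1"
    using theta_vals[OF assms(1)] R_def by auto
  have dm: "\<And>a. a \<in> Dminus_out P \<longleftrightarrow> theta (R a) \<in> Dminus a"
    by (simp add: Dminus_out_def R_def)
  have one: "\<And>a b. a \<in> Dminus_out P \<Longrightarrow> b \<in> Dminus_out P \<Longrightarrow> a = b"
    using at_most_one[OF assms(3)] by blast
  have B: "r2 \<in> R r3"
  proof (rule ccontr)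
    assume n23: "r2 \<notin> R r3"
    hence n32: "r3 \<notin> R r2" using sym by blast
    show False
    proof (cases "r1 \<in> R r2")
      case True
      have "R r2 \<inter> red = {r1, r2}" using True n32 mem by (auto simp: red_def)
      hence "R r1 \<inter> red = {r1, r2}" using eq[OF True] by simp
      hence a: "r1 \<in> Dminus_out P" using t2 dm by auto
      have "r1 \<notin> R r3" using eq True n32 mem by metis
      hence "R r3 \<inter> red = {r3}" using n23 mem by (auto simp: red_def)
      hence "r3 \<in> Dminus_out P" using t1 dm by auto
      thus False using one a by blast
    next
      case False
      have "R r2 \<inter> red = {r2}" using False n32 mem by (auto simp: red_def)
      hence a: "r2 \<in> Dminus_out P" using t1 dm by auto
      show False
      proof (cases "r1 \<in> R r3")
        case True
        have "R r3 \<inter> red = {r1, r3}" using True n23 mem by (auto simp: red_def)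
        hence "R r1 \<inter> red = {r1, r3}" using eq[OF True] by simp
        hence "r1 \<in> Dminus_out P" using t2 dm by auto
        thus False using one a by blast
      next
        case False
        hence "R r3 \<inter> red = {r3}" using n23 mem by (auto simp: red_def)
        hence "r3 \<in> Dminus_out P" using t1 dm by auto
        thus False using one a by blast
      qed
    qed
  qed
  have R23: "R r2 = R r3" using eq[OF B] .
  have n1: "r1 \<notin> R r2"
  proof
    assume h: "r1 \<in> R r2"
    have "R r2 \<inter> red = red" using h R23 mem B by (auto simp: red_def)
    hence "r2 \<in> Dminus_out P" "r3 \<in> Dminus_out P" using t3 dm R23 by auto
    thus False using one by blast
  qed
  have red2: "R r2 \<inter> red = {r2, r3}" using n1 R23 mem by (auto simp: red_def)
  have red1: "R r1 \<inter> red = {r1}" using n1 R23 mem sym by (auto simp: red_def)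
  have "card (R r1 - {r1}) = 2" using cd mem by (simp add: card_Diff_singleton)
  then obtain x1 x2 where x12: "R r1 - {r1} = {x1, x2}" "x1 \<noteq> x2" by (auto simp: card_2_iff)
  have R1: "R r1 = {r1, x1, x2}" using x12 mem by blast
  have x12r: "x1 \<notin> red" "x2 \<notin> red" using red1 x12 by blast+
  have "card (R r2 - {r2, r3}) = 1" using cd mem R23 B
    by (simp add: card_Diff_subset)
  then obtain x3 where x3: "R r2 - {r2, r3} = {x3}" by (auto simp: card_1_singleton_iff)
  have R2: "R r2 = {r2, r3, x3}" using x3 mem B R23 by blast
  have x3r: "x3 \<notin> red" using red2 x3 by blast
  have x3n: "x3 \<notin> R r1"
  proof
    assume "x3 \<in> R r1"
    hence "R x3 = R r1" using eq by blast
    moreover have "R x3 = R r2" using eq[of x3 r2] R2 by blast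
    ultimately show False using red1 red2 by auto
  qed
  have x3d: "x3 \<noteq> x1" "x3 \<noteq> x2" using x3n R1 by auto
  have Rred: "\<And>b c. c \<in> red \<Longrightarrow> c \<in> R b \<Longrightarrow> R b = R r1 \<or> R b = R r2"
  proof -
    fix b c assume "c \<in> red" "c \<in> R b"
    hence "R c = R b" using eq by blast
    moreover have "R r3 = R r2" using R23 by simp
    moreover have "c = r1 \<or> c = r2 \<or> c = r3" using \<open>c \<in> red\<close> by (auto simp: red_def)
    ultimately show "R b = R r1 \<or> R b = R r2" by metis
  qed
  have dis4: "\<And>b. b \<in> {b1, b2, b3, b4} \<Longrightarrow> b \<notin> R r1 \<Longrightarrow> b \<notin> R r2 \<Longrightarrow> b \<in> Dminus_out P"
  proof -
    fix b assume b: "b \<in> {b1, b2, b3, b4}" "b \<notin> R r1" "b \<notin> R r2"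
    have "R b \<inter> red = {}"
    proof (rule ccontr)
      assume "R b \<inter> red \<noteq> {}"
      then obtain c where "c \<in> red" "c \<in> R b" by blast
      hence "R b = R r1 \<or> R b = R r2" by (rule Rred)
      thus False using mem[of b] b(2,3) by auto
    qed
    hence "theta (R b) = 0" using t0 by blast
    thus "b \<in> Dminus_out P" using dm b(1) by auto
  qed
  have dis56: "\<And>b. b \<in> {b5, b6} \<Longrightarrow> b \<in> R r1 \<or> b \<in> R r2 \<Longrightarrow> b \<in> Dminus_out P"
  proof -
    fix b assume b: "b \<in> {b5, b6}" "b \<in> R r1 \<or> b \<in> R r2"
    from b(2) have "theta (R b) = 1/3 \<or> theta (R b) = 2/3"
    proof
      assume "b \<in> R r1" hence "R b = R r1" using eq by blast
      thus ?thesis using t1[of b r1] red1 by simp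
    next
      assume "b \<in> R r2" hence "R b = R r2" using eq by blast
      thus ?thesis using t2[of b r2 r3] red2 by simp
    qed
    hence "theta (R b) \<in> {1/3, 2/3}" by blast
    moreover have "b = b5 \<or> b = b6" using b(1) by blast
    ultimately have "theta (R b) \<in> Dminus b" by fastforce
    thus "b \<in> Dminus_out P" using dm by blast
  qed
  obtain w where w: "w \<in> {b1, b2, b3, b4}" "w \<notin> {x1, x2, x3}"
  proof -
    have "\<not> {b1, b2, b3, b4} \<subseteq> {x1, x2, x3}"
    proof
      assume "{b1, b2, b3, b4} \<subseteq> {x1, x2, x3}"
      from card_mono[OF _ this] have "card {b1, b2, b3, b4} \<le> card {x1, x2, x3}" by simp
      moreover have "card {x1, x2, x3} \<le> 3" by (rule order.trans[OF card_insert_le_m1]) (auto simp: card_insert_le_m1)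
      ultimately show False by simp
    qed
    thus ?thesis using that by blast
  qed
  have wD: "w \<in> Dminus_out P" using dis4 w R1 R2 x12r by (auto simp: red_def)
  have b56: "b5 \<notin> R r1" "b5 \<notin> R r2" "b6 \<notin> R r1" "b6 \<notin> R r2"
    using dis56 one wD w by fastforce+
  have xin: "x1 \<in> {b1, b2, b3, b4}" "x2 \<in> {b1, b2, b3, b4}" "x3 \<in> {b1, b2, b3, b4}"
    using not_red x12r x3r b56 R1 R2 by auto
  have wu: "\<And>v. v \<in> {b1, b2, b3, b4} \<Longrightarrow> v \<notin> {x1, x2, x3} \<Longrightarrow> v = w"
  proof -
    fix v assume v: "v \<in> {b1, b2, b3, b4}" "v \<notin> {x1, x2, x3}"
    have "v \<notin> R r1" "v \<notin> R r2" using v R1 R2 by auto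
    hence "v \<in> Dminus_out P" using dis4 v(1) by blast
    thus "v = w" using one wD by blast
  qed
  have rest: "\<And>y. y \<notin> R r1 \<Longrightarrow> y \<notin> R r2 \<Longrightarrow> y \<in> {b5, b6, w}"
  proof -
    fix y assume y: "y \<notin> R r1" "y \<notin> R r2"
    hence "y \<notin> red" using R1 R2 by (auto simp: red_def)
    hence "y \<in> {b1, b2, b3, b4, b5, b6}" by (rule not_red)
    thus "y \<in> {b5, b6, w}" using wu y R1 R2 by auto
  qed
  have sub: "R b5 \<subseteq> {b5, b6, w}"
  proof
    fix y assume y: "y \<in> R b5"
    have "y \<notin> R r1"
    proof
      assume "y \<in> R r1" hence "R y = R r1" using eq by blast
      moreover have "R y = R b5" using eq y by blast
      ultimately show False using b56 mem by metis
    qed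
    moreover have "y \<notin> R r2"
    proof
      assume "y \<in> R r2" hence "R y = R r2" using eq by blast
      moreover have "R y = R b5" using eq y by blast
      ultimately show False using b56 mem by metis
    qed
    ultimately show "y \<in> {b5, b6, w}" using rest by blast
  qed
  have "w \<noteq> b5" "w \<noteq> b6" using w(1) by auto
  hence c3: "card {b5, b6, w} = 3" by simp
  have R5: "R b5 = {b5, b6, w}" using card_subset_eq[OF _ sub] cd[of b5] c3 by simp
  have PE: "P = {R r1, R r2, R b5}"
  proof
    show "{R r1, R r2, R b5} \<subseteq> P" using room_basic[OF assms(1)] R_def by auto
  next
    show "P \<subseteq> {R r1, R r2, R b5}"
    proof
      fix C assume C: "C \<in> P"
      have "C \<noteq> {}" using C partition_onD3 assms(1) by (auto simp: is_outcome_def)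
      then obtain a where a: "a \<in> C" by blast
      have RA: "R a = C" using room_unique[OF assms(1) C a] R_def by simp
      have "a \<in> R r1 \<or> a \<in> R r2 \<or> a \<in> R b5" using rest R5 by blast
      thus "C \<in> {R r1, R r2, R b5}" using eq RA by auto
    qed
  qed
  have dst: "distinct [x1, x2, x3, w]" using x12(2) x3d w(2) by auto
  have s1: "{x1, x2, x3, w} \<subseteq> {b1, b2, b3, b4}" using xin w(1) by blast
  have s2: "{b1, b2, b3, b4} \<subseteq> {x1, x2, x3, w}"
  proof
    fix v assume "v \<in> {b1, b2, b3, b4}"
    thus "v \<in> {x1, x2, x3, w}" using wu[of v] by blast
  qed
  have PP: "P = {{r1, x1, x2}, {r2, r3, x3}, {b5, b6, w}}" using PE R1 R2 R5 by simp
  show ?thesis unfolding top_type_def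
    using dst s1 s2 PP by blast
qed

end
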